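(* Let $\mathcal{C}$ be a finite set of classes with $|\mathcal{C}| = C$, let $\mathcal{X}$ be a domain of datapoints, and let $(X, Y, \tilde{Y})$ be random variables with $(X,Y)$ distributed according to a prior $Q_{X,Y}$ on $\mathcal{X}\times\mathcal{C}$ and $\tilde{Y}$ taking values in $\mathcal{C}$. Assume: (i) (independent noise) $X$ is independent of $\tilde{Y}$ conditioning on $Y$; (ii) (informative noisy label) the $C\times C$ noise transition matrix $\mathbf{T}_{Y\rightarrow\tilde{Y}}$, with entries $\mathbf{T}_{Y\rightarrow\tilde{Y}}(y,\tilde{y}) = \Pr[\tilde{Y}=\tilde{y}\mid Y=y]$, is invertible. For a (randomized) classifier $h$ and a $\mathcal{C}$-valued random variable $Z\in\{Y,\tilde Y\}$, define $$\mathcal{L}_{\mathrm{DMI}}(Q_{h(X),Z}) := -\log\bigl(|\det(\mathbf{Q}_{h(X),Z})|\bigr),$$ where $\mathbf{Q}_{h(X),Z}$ is the $C\times C$ matrix with entries $\mathbf{Q}_{h(X),Z}(c,z) = \Pr[h(X)=c, Z=z]$. Then: 1. (legal) If there exists a ground truth classifier $h^*$ with $h^*(X)=Y$, then for every classifier $h$, $\mathcal{L}_{\mathrm{DMI}}(Q_{h^*(X),\tilde{Y}})\le \mathcal{L}_{\mathrm{DMI}}(Q_{h(X),\tilde{Y}})$, and the inequality is strict when $h(X)$ is not a permutation of $h^*(X)$, i.e. when there is no permutation $\pi:\mathcal{C}\to\mathcal{C}$ with $h(x)=\pi(h^*(x))$ for all $x\in\mathcal{X}$. 2. (noise-robust)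 For the set $\mathcal{H}$ of all possible classifiers, $$\arg\min_{h\in\mathcal{H}}\mathcal{L}_{\mathrm{DMI}}(Q_{h(X),\tilde{Y}}) = \arg\min_{h\in\mathcal{H}}\mathcal{L}_{\mathrm{DMI}}(Q_{h(X),Y}),$$ and in fact there is a constant $\alpha$ (not depending on $h$) such that for every classifier $h$, $\mathcal{L}_{\mathrm{DMI}}(Q_{h(X),\tilde{Y}}) = \mathcal{L}_{\mathrm{DMI}}(Q_{h(X),Y}) + \alpha$. 3. (information-monotone) For every two classifiers $h,h'$, if $h'(X)$ is independent of $Y$ conditioning on $h(X)$, then $\mathcal{L}_{\mathrm{DMI}}(Q_{h(X),\tilde{Y}})\le\mathcal{L}_{\mathrm{DMI}}(Q_{h'(X),\tilde{Y}})$.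
   Context: A (randomized) classifier is a map $h:\mathcal{X}\to\Delta_{\mathcal{C}}$, where $\Delta_{\mathcal{C}}$ is the set of probability distributions over $\mathcal{C}$; given $x$, $h(x)_c$ is the probability that $h$ maps $x$ to class $c$. The random variable $h(X)$ takes value $c$ with probability $h(X)_c$ given $X$, and, fixing the input $x$, the randomness of the classifier is independent of everything else (in particular of $Y$ and $\tilde{Y}$). The convention $-\log 0 = +\infty$ is used when the determinant vanishes. *)

theory Defs
  imports "HOL-Probability.Probability"
begin

text \<open>A randomized classifier on the measurable space SX of datapoints:
  h x c is the probability that h maps x to class c.\<close>
definition is_classifier :: "'x measure \<Rightarrow> ('x \<Rightarrow> 'c::finite \<Rightarrow> real) \<Rightarrow> bool" where
  "is_classifier SX h \<longleftrightarrow>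
     (\<forall>x c. 0 \<le> h x c) \<and> (\<forall>x. (\<Sum>c\<in>UNIV. h x c) = 1) \<and>
     (\<forall>c. (\<lambda>x. h x c) \<in> borel_measurable SX)"

definition det_clf :: "('x \<Rightarrow> 'c) \<Rightarrow> 'x \<Rightarrow> 'c \<Rightarrow> real" where
  "det_clf f x c = (if c = f x then 1 else 0)"

text \<open>Joint distribution matrix Q_{h(X),Z}(c,z) = Pr[h(X)=c, Z=z]; the randomness of h
  is independent of everything else given X.\<close>
definition Qmat :: "'w measure \<Rightarrow> ('w \<Rightarrow> 'x) \<Rightarrow> ('x \<Rightarrow> 'c::finite \<Rightarrow> real) \<Rightarrow> ('w \<Rightarrow> 'c)
    \<Rightarrow> real^'c^'c" where
  "Qmat M X h Z = (\<chi> c z. \<integral>w. h (X w) c * (if Z w = z then 1 else 0) \<partial>M)"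

definition L_DMI :: "real^'c^'c \<Rightarrow> ereal" where
  "L_DMI Q = (if det Q = 0 then \<infinity> else ereal (- ln \<bar>det Q\<bar>))"

definition Tmat :: "'w measure \<Rightarrow> ('w \<Rightarrow> 'c::finite) \<Rightarrow> ('w \<Rightarrow> 'c) \<Rightarrow> real^'c^'c" where
  "Tmat M Y Yt = (\<chi> y y'. measure M {w \<in> space M. Y w = y \<and> Yt w = y'}
                         / measure M {w \<in> space M. Y w = y})"

definition cond_indep_XYt :: "'w measure \<Rightarrow> 'x measure \<Rightarrow> ('w \<Rightarrow> 'x) \<Rightarrow> ('w \<Rightarrow> 'c) \<Rightarrow> ('w \<Rightarrow> 'c) \<Rightarrow> bool" where
  "cond_indep_XYt M SX X Y Yt \<longleftrightarrow>
    (\<forall>A\<in>sets SX. \<forall>y y'.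
       measure M {w \<in> space M. X w \<in> A \<and> Yt w = y' \<and> Y w = y} * measure M {w \<in> space M. Y w = y}
     = measure M {w \<in> space M. X w \<in> A \<and> Y w = y} * measure M {w \<in> space M. Yt w = y' \<and> Y w = y})"

text \<open>Joint probabilities involving the classifier outputs h(X), h'(X) (whose internal
  randomness is independent given X) and Y.\<close>
definition P_hh'Y :: "'w measure \<Rightarrow> ('w \<Rightarrow> 'x) \<Rightarrow> ('x \<Rightarrow> 'c \<Rightarrow> real) \<Rightarrow> ('x \<Rightarrow> 'c \<Rightarrow> real)
    \<Rightarrow> ('w \<Rightarrow> 'c) \<Rightarrow> 'c \<Rightarrow> 'c \<Rightarrow> 'c \<Rightarrow> real" where
  "P_hh'Y M X h h' Y c c' y = (\<integral>w. h (X w) c * h' (X w) c' * (if Y w = y then 1 else 0) \<partial>M)"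

definition P_hh' :: "'w measure \<Rightarrow> ('w \<Rightarrow> 'x) \<Rightarrow> ('x \<Rightarrow> 'c \<Rightarrow> real) \<Rightarrow> ('x \<Rightarrow> 'c \<Rightarrow> real)
    \<Rightarrow> 'c \<Rightarrow> 'c \<Rightarrow> real" where
  "P_hh' M X h h' c c' = (\<integral>w. h (X w) c * h' (X w) c' \<partial>M)"

definition P_hY :: "'w measure \<Rightarrow> ('w \<Rightarrow> 'x) \<Rightarrow> ('x \<Rightarrow> 'c \<Rightarrow> real) \<Rightarrow> ('w \<Rightarrow> 'c) \<Rightarrow> 'c \<Rightarrow> 'c \<Rightarrow> real" where
  "P_hY M X h Y c y = (\<integral>w. h (X w) c * (if Y w = y then 1 else 0) \<partial>M)"

definition P_h :: "'w measure \<Rightarrow> ('w \<Rightarrow> 'x) \<Rightarrow> ('x \<Rightarrow> 'c \<Rightarrow> real) \<Rightarrow> 'c \<Rightarrow> real" where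
  "P_h M X h c = (\<integral>w. h (X w) c \<partial>M)"

definition cond_indep_clf :: "'w measure \<Rightarrow> ('w \<Rightarrow> 'x) \<Rightarrow> ('x \<Rightarrow> 'c \<Rightarrow> real) \<Rightarrow> ('x \<Rightarrow> 'c \<Rightarrow> real)
    \<Rightarrow> ('w \<Rightarrow> 'c) \<Rightarrow> bool" where
  "cond_indep_clf M X h h' Y \<longleftrightarrow>
    (\<forall>c c' y. P_hh'Y M X h h' Y c c' y * P_h M X h c = P_hY M X h Y c y * P_hh' M X h h' c c')"

end

theory Submission
  imports Defs
begin

lemma sdiff: fixes f :: "('n::finite \<Rightarrow> 'n) \<Rightarrow> real" shows
  "sum f UNIV = sum f (UNIV - {p. p permutes (UNIV::'n set)}) + sum f {p. p permutes (UNIV::'n set)}"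
  by (rule sum.subset_diff) auto


lemma det_chain:
  fixes A :: "real^'n^'n"
  assumes nn: "\<And>i j. 0 \<le> A$i$j"
  shows "\<bar>det A\<bar> \<le> (\<Sum>p\<in>{p. p permutes (UNIV::'n set)}. \<Prod>i\<in>UNIV. A$i$p i)"
    and "(\<Sum>p\<in>{p. p permutes (UNIV::'n set)}. \<Prod>i\<in>UNIV. A$i$p i) + (\<Sum>g\<in>UNIV - {p. p permutes (UNIV::'n set)}. \<Prod>i\<in>UNIV. A$i$g i)
          = (\<Prod>i\<in>UNIV. \<Sum>j\<in>UNIV. A$i$j)"
proof -
  have "\<bar>det A\<bar> \<le> (\<Sum>p\<in>{p. p permutes (UNIV::'n set)}. \<bar>of_int (sign p) * (\<Prod>i\<in>UNIV. A$i$p i)\<bar>)"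
    unfolding det_def by (rule sum_abs)
  also have "\<dots> = (\<Sum>p\<in>{p. p permutes (UNIV::'n set)}. \<Prod>i\<in>UNIV. A$i$p i)"
    by (rule sum.cong) (auto simp: abs_mult sign_def nn prod_nonneg)
  finally show "\<bar>det A\<bar> \<le> (\<Sum>p\<in>{p. p permutes (UNIV::'n set)}. \<Prod>i\<in>UNIV. A$i$p i)" .
  have "(\<Prod>i\<in>UNIV. \<Sum>j\<in>UNIV. A$i$j) = (\<Sum>g\<in>PiE UNIV (\<lambda>_. UNIV). \<Prod>i\<in>UNIV. A$i$g i)"
    by (rule prod_sum_PiE) auto
  also have "PiE (UNIV::'n set) (\<lambda>_. UNIV::'n set) = UNIV" by auto
  finally have e: "(\<Prod>i\<in>UNIV. \<Sum>j\<in>UNIV. A$i$j) = (\<Sum>g\<in>UNIV. \<Prod>i\<in>UNIV. A$i$g i)" .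
  show "(\<Sum>p\<in>{p. p permutes (UNIV::'n set)}. \<Prod>i\<in>UNIV. A$i$p i) + (\<Sum>g\<in>UNIV - {p. p permutes (UNIV::'n set)}. \<Prod>i\<in>UNIV. A$i$g i)
          = (\<Prod>i\<in>UNIV. \<Sum>j\<in>UNIV. A$i$j)"
    proof -
    have "(\<Sum>g\<in>UNIV. \<Prod>i\<in>UNIV. A$i$g i) = (\<Sum>g\<in>UNIV - {p. p permutes (UNIV::'n set)}. \<Prod>i\<in>UNIV. A$i$g i) + (\<Sum>p\<in>{p. p permutes (UNIV::'n set)}. \<Prod>i\<in>UNIV. A$i$p i)"
      by (rule sdiff)
    then show ?thesis unfolding e by linarith
  qed
qed

lemma det_le_prod_rowsum:
  fixes A :: "real^'n^'n"
  assumes nn: "\<And>i j. 0 \<le> A$i$j"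
  shows "\<bar>det A\<bar> \<le> (\<Prod>i\<in>UNIV. \<Sum>j\<in>UNIV. A$i$j)"
proof -
  have "0 \<le> (\<Sum>g\<in>UNIV - {p. p permutes (UNIV::'n set)}. \<Prod>i\<in>UNIV. A$i$g i)"
    by (intro sum_nonneg prod_nonneg) (auto simp: nn)
  then show ?thesis using det_chain[OF nn] by linarith
qed

lemma det_eq_prod_rowsum_perm:
  fixes A :: "real^'n^'n"
  assumes nn: "\<And>i j. 0 \<le> A$i$j" and pos: "\<And>i. 0 < (\<Sum>j\<in>UNIV. A$i$j)"
    and eq: "\<bar>det A\<bar> = (\<Prod>i\<in>UNIV. \<Sum>j\<in>UNIV. A$i$j)"
  shows "\<exists>\<pi>. bij \<pi> \<and> (\<forall>i j. j \<noteq> \<pi> i \<longrightarrow> A$i$j = 0)"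
proof -
  have "(\<Sum>g\<in>UNIV - {p. p permutes (UNIV::'n set)}. \<Prod>i\<in>UNIV. A$i$g i) \<le> 0"
    using det_chain[OF nn] eq by linarith
  moreover have "0 \<le> (\<Sum>g\<in>UNIV - {p. p permutes (UNIV::'n set)}. \<Prod>i\<in>UNIV. A$i$g i)"
    by (intro sum_nonneg prod_nonneg nn)
  ultimately have s0: "(\<Sum>g\<in>UNIV - {p. p permutes (UNIV::'n set)}. \<Prod>i\<in>UNIV. A$i$g i) = 0"
    by linarith
  have z: "(\<Prod>i\<in>UNIV. A$i$g i) = 0" if "g \<in> UNIV - {p. p permutes (UNIV::'n set)}" for g
  proof -
    have fin: "finite (UNIV - {p. p permutes (UNIV::'n set)})" by (intro finite_Diff finite_class.finite_UNIV)
    have nn2: "\<And>x. 0 \<le> (\<Prod>i\<in>UNIV. A$i$x i)" by (intro prod_nonneg) (simp add: nn)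
    show ?thesis using s0 sum_nonneg_eq_0_iff[OF fin, of "\<lambda>g. \<Prod>i\<in>UNIV. A$i$g i"] that nn2 by blast
  qed
  have ex: "\<exists>j. 0 < A$i$j" for i
  proof (rule ccontr)
    assume "\<not> ?thesis"
    then have "(\<Sum>j\<in>UNIV. A$i$j) \<le> 0" by (intro sum_nonpos) (auto simp: not_less)
    with pos[of i] show False by linarith
  qed
  define \<pi> where "\<pi> i = (SOME j. 0 < A$i$j)" for i
  have \<pi>pos: "0 < A$i$\<pi> i" for i unfolding \<pi>_def by (rule someI_ex[OF ex])
  have disj: False if "i \<noteq> i'" "0 < A$i$j" "0 < A$i'$j" for i i' j
  proof -
    define g where "g k = (if k = i \<or> k = i' then j else \<pi> k)" for k
    have "g i = g i'" by (simp add: g_def)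
    have "\<not> inj g"
    proof
      assume "inj g" then have "i = i'" using \<open>g i = g i'\<close> by (rule injD)
      with that(1) show False by simp
    qed
    then have "g \<in> UNIV - {p. p permutes (UNIV::'n set)}" using permutes_inj by blast
    from z[OF this] have "(\<Prod>k\<in>UNIV. A$k$g k) = 0" .
    moreover have "0 < (\<Prod>k\<in>UNIV. A$k$g k)"
    proof (rule prod_pos)
      fix k :: 'n
      show "0 < A$k$g k"
      proof (cases "k = i \<or> k = i'")
        case True then show ?thesis using that(2,3) unfolding g_def by auto
      next
        case False then show ?thesis using \<pi>pos[of k] unfolding g_def by simp
      qed
    qed
    ultimately show False by (simp del: prod_zero_iff)
  qed
  have "inj \<pi>"
  proof (rule injI)
    fix x y assume "\<pi> x = \<pi> y"
    show "x = y"
    proof (rule ccontr)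
      assume "x \<noteq> y"
      moreover have "0 < A$y$\<pi> x" using \<pi>pos[of y] \<open>\<pi> x = \<pi> y\<close> by simp
      ultimately show False using disj[of x y "\<pi> x"] \<pi>pos[of x] by blast
    qed
  qed
  then have b: "bij \<pi>" unfolding bij_def using finite_UNIV_inj_surj[OF finite_class.finite_UNIV] by blast
  have "A$i$j = 0" if "j \<noteq> \<pi> i" for i j
  proof (rule ccontr)
    assume "A$i$j \<noteq> 0"
    then have "0 < A$i$j" using nn[of i j] by (simp add: less_le)
    have "surj \<pi>" using b by (rule bij_is_surj)
    then obtain i' where ji: "j = \<pi> i'" by (metis surjD)
    have "i \<noteq> i'" using that ji by blast
    moreover have "0 < A$i'$j" using \<pi>pos[of i'] ji by simp
    ultimately show False using disj[of i i' j] \<open>0 < A$i$j\<close> by blast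
  qed
  with b show ?thesis by (intro exI[of _ \<pi>]) simp
qed

lemma gen_ci:
  fixes g :: "'x \<Rightarrow> real"
  assumes fm: "finite_measure M" and X[measurable]: "X \<in> measurable M SX"
    and B1[measurable]: "B1 \<in> sets M" and B2[measurable]: "B2 \<in> sets M" and a: "0 \<le> a" and b: "0 \<le> b"
    and hyp: "\<And>A. A \<in> sets SX \<Longrightarrow> measure M (B1 \<inter> (X -` A \<inter> space M)) * a = measure M (B2 \<inter> (X -` A \<inter> space M)) * b"
    and g[measurable]: "g \<in> borel_measurable SX"
  shows "(\<integral>w. indicator B1 w * g (X w) \<partial>M) * a = (\<integral>w. indicator B2 w * g (X w) \<partial>M) * b"
proof -
  interpret finite_measure M by (rule fm)
  define N1 where "N1 = distr (density M (indicator B1)) SX X"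
  define N2 where "N2 = distr (density M (indicator B2)) SX X"
  have Xd1: "X \<in> measurable (density M (indicator B1)) SX" by simp
  have Xd2: "X \<in> measurable (density M (indicator B2)) SX" by simp
  have e1: "emeasure N1 A = ennreal (measure M (B1 \<inter> (X -` A \<inter> space M)))" if "A \<in> sets SX" for A
    unfolding N1_def using that
    by (simp add: emeasure_distr[OF Xd1] emeasure_restricted emeasure_eq_measure)
  have e2: "emeasure N2 A = ennreal (measure M (B2 \<inter> (X -` A \<inter> space M)))" if "A \<in> sets SX" for A
    unfolding N2_def using that
    by (simp add: emeasure_distr[OF Xd2] emeasure_restricted emeasure_eq_measure)
  have eqm: "density N1 (\<lambda>_. ennreal a) = density N2 (\<lambda>_. ennreal b)"
  proof (rule measure_eqI)
    show "sets (density N1 (\<lambda>_. ennreal a)) = sets (density N2 (\<lambda>_. ennreal b))"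
      by (simp add: N1_def N2_def)
    fix A assume "A \<in> sets (density N1 (\<lambda>_. ennreal a))"
    then have A: "A \<in> sets SX" by (simp add: N1_def)
    have A1: "A \<in> sets N1" using A by (simp add: N1_def)
    have A2: "A \<in> sets N2" using A by (simp add: N2_def)
    show "emeasure (density N1 (\<lambda>_. ennreal a)) A = emeasure (density N2 (\<lambda>_. ennreal b)) A"
      using hyp[OF A] a b
      by (simp add: emeasure_density_const[OF A1] emeasure_density_const[OF A2] e1[OF A] e2[OF A]
          ennreal_mult'[symmetric] mult.commute)
  qed
  have j1: "(\<integral>x. g x \<partial>N1) = (\<integral>w. indicator B1 w * g (X w) \<partial>M)"
  proof -
    have "(\<integral>x. g x \<partial>N1) = (\<integral>w. g (X w) \<partial>density M (\<lambda>w. ennreal (indicator B1 w :: real)))"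
      unfolding N1_def ennreal_indicator by (rule integral_distr) auto
    also have "\<dots> = (\<integral>w. indicator B1 w * g (X w) \<partial>M)"
      by (subst integral_density) auto
    finally show ?thesis .
  qed
  have i1: "integral\<^sup>L (density N1 (\<lambda>_. ennreal a)) g = a * (\<integral>w. indicator B1 w * g (X w) \<partial>M)"
  proof -
    have "integral\<^sup>L (density N1 (\<lambda>_. ennreal a)) g = (\<integral>x. a * g x \<partial>N1)"
      by (subst integral_density) (auto simp: N1_def a)
    then show ?thesis using j1 by simp
  qed
  have j2: "(\<integral>x. g x \<partial>N2) = (\<integral>w. indicator B2 w * g (X w) \<partial>M)"
  proof -
    have "(\<integral>x. g x \<partial>N2) = (\<integral>w. g (X w) \<partial>density M (\<lambda>w. ennreal (indicator B2 w :: real)))"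
      unfolding N2_def ennreal_indicator by (rule integral_distr) auto
    also have "\<dots> = (\<integral>w. indicator B2 w * g (X w) \<partial>M)"
      by (subst integral_density) auto
    finally show ?thesis .
  qed
  have i2: "integral\<^sup>L (density N2 (\<lambda>_. ennreal b)) g = b * (\<integral>w. indicator B2 w * g (X w) \<partial>M)"
  proof -
    have "integral\<^sup>L (density N2 (\<lambda>_. ennreal b)) g = (\<integral>x. b * g x \<partial>N2)"
      by (subst integral_density) (auto simp: N2_def b)
    then show ?thesis using j2 by simp
  qed
  show ?thesis using i1 i2 eqm by (simp add: mult.commute)
qed

locale dmi = prob_space M for M :: "'w measure" +
  fixes SX :: "'x measure" and X :: "'w \<Rightarrow> 'x" and Y Yt :: "'w \<Rightarrow> 'c::finite"
  assumes X[measurable]: "X \<in> measurable M SX"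
    and Y[measurable]: "Y \<in> measurable M (count_space UNIV)"
    and Yt[measurable]: "Yt \<in> measurable M (count_space UNIV)"
begin

definition p :: "'c \<Rightarrow> real" where "p y = measure M {w\<in>space M. Y w = y}"

lemma clf_nn: "is_classifier SX h \<Longrightarrow> 0 \<le> h x c"
  by (simp add: is_classifier_def)

lemma clf_le1: "is_classifier SX h \<Longrightarrow> h x c \<le> 1"
proof -
  assume h: "is_classifier SX h"
  have "h x c \<le> (\<Sum>c\<in>UNIV. h x c)"
    by (rule member_le_sum) (use h in \<open>auto simp: is_classifier_def\<close>)
  then show ?thesis using h by (simp add: is_classifier_def)
qed

lemma clf_sum: "is_classifier SX h \<Longrightarrow> (\<Sum>c\<in>UNIV. h x c) = 1"
  by (simp add: is_classifier_def)

lemma clf_meas_SX: "is_classifier SX h \<Longrightarrow> (\<lambda>x. h x c) \<in> borel_measurable SX"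
  by (simp add: is_classifier_def)

lemma clf_meas: "is_classifier SX h \<Longrightarrow> (\<lambda>w. h (X w) c) \<in> borel_measurable M"
  using measurable_compose[OF X clf_meas_SX] by blast

lemma ind_meas: "(\<lambda>w. if Y w = y then 1 else (0::real)) \<in> borel_measurable M"
  by measurable

lemma indt_meas: "(\<lambda>w. if Yt w = y then 1 else (0::real)) \<in> borel_measurable M"
  by measurable

lemma int_bdd:
  fixes F :: "'w \<Rightarrow> real"
  assumes "F \<in> borel_measurable M" "\<And>w. \<bar>F w\<bar> \<le> B"
  shows "integrable M F"
  by (rule integrable_const_bound[where B=B]) (use assms in auto)

lemma int_clf:
  assumes h: "is_classifier SX h"
    and Z[measurable]: "Z \<in> measurable M (count_space UNIV)" and Z'[measurable]: "Z' \<in> measurable M (count_space UNIV)"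
  shows "integrable M (\<lambda>w. h (X w) c * (if Z w = z then 1 else 0))"
    and "integrable M (\<lambda>w. h (X w) c * (if Z w = z then 1 else 0) * (if Z' w = z' then 1 else 0))"
proof -
  have [measurable]: "(\<lambda>w. h (X w) c) \<in> borel_measurable M" by (rule clf_meas[OF h])
  show "integrable M (\<lambda>w. h (X w) c * (if Z w = z then 1 else 0))"
    by (rule int_bdd[where B=1]) (auto simp: clf_nn[OF h] clf_le1[OF h])
  show "integrable M (\<lambda>w. h (X w) c * (if Z w = z then 1 else 0) * (if Z' w = z' then 1 else 0))"
    by (rule int_bdd[where B=1]) (auto simp: clf_nn[OF h] clf_le1[OF h])
qed

lemma int_ind: "(\<integral>w. (if Y w = y then 1 else 0) \<partial>M) = p y"
proof -
  have "(\<integral>w. (if Y w = y then 1 else 0) \<partial>M) = (\<integral>w. indicator {w\<in>space M. Y w = y} w \<partial>M)"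
    by (rule Bochner_Integration.integral_cong) (auto simp: indicator_def)
  also have "\<dots> = p y" unfolding p_def by (simp add: Int_absorb2)
  finally show ?thesis .
qed

lemma Q_colsum:
  assumes h: "is_classifier SX h"
  shows "(\<Sum>c\<in>UNIV. Qmat M X h Y $ c $ y) = p y"
proof -
  have "(\<Sum>c\<in>UNIV. Qmat M X h Y $ c $ y) = (\<integral>w. (\<Sum>c\<in>UNIV. h (X w) c * (if Y w = y then 1 else 0)) \<partial>M)"
    unfolding Qmat_def by (simp add: integral_sum int_clf[OF h Y Y])
  also have "\<dots> = (\<integral>w. (if Y w = y then 1 else 0) \<partial>M)"
    by (rule Bochner_Integration.integral_cong) (simp_all add: sum_distrib_right[symmetric] clf_sum[OF h])
  finally show ?thesis by (simp add: int_ind)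
qed

lemma Q_nn:
  assumes h: "is_classifier SX h"
  shows "0 \<le> Qmat M X h Z $ c $ z"
  unfolding Qmat_def using clf_nn[OF h] by (simp add: integral_nonneg)

end

context dmi begin

lemma p_pos_of_inv:
  assumes inv: "invertible (Tmat M Y Yt)"
  shows "0 < p y"
proof (rule ccontr)
  assume "\<not> 0 < p y"
  then have p0: "p y = 0" using measure_nonneg[of M] unfolding p_def by (metis less_eq_real_def)
  have "row y (Tmat M Y Yt) = 0"
    using p0 unfolding row_def Tmat_def p_def by (simp add: vec_eq_iff)
  then have "det (Tmat M Y Yt) = 0" by (rule det_zero_row)
  with inv show False by (simp add: invertible_det_nz)
qed

lemma Q_decomp:
  assumes indep: "cond_indep_XYt M SX X Y Yt" and ppos: "\<And>y. 0 < p y"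
    and h: "is_classifier SX h"
  shows "Qmat M X h Yt = Qmat M X h Y ** Tmat M Y Yt"
proof -
  have entry: "(\<integral>w. h (X w) c * (if Y w = y then 1 else 0) * (if Yt w = z then 1 else 0) \<partial>M)
      = Qmat M X h Y $ c $ y * Tmat M Y Yt $ y $ z" for c y z
  proof -
    define B1 where "B1 = {w\<in>space M. Yt w = z \<and> Y w = y}"
    define B2 where "B2 = {w\<in>space M. Y w = y}"
    define m where "m = measure M {w\<in>space M. Yt w = z \<and> Y w = y}"
    have [measurable]: "B1 \<in> sets M" "B2 \<in> sets M" unfolding B1_def B2_def by measurable
    have gm: "(\<lambda>x. h x c) \<in> borel_measurable SX" by (rule clf_meas_SX[OF h])
    have hyp: "measure M (B1 \<inter> (X -` A \<inter> space M)) * p y = measure M (B2 \<inter> (X -` A \<inter> space M)) * m"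
      if A: "A \<in> sets SX" for A
    proof -
      have "measure M {w \<in> space M. X w \<in> A \<and> Yt w = z \<and> Y w = y} * measure M {w \<in> space M. Y w = y}
          = measure M {w \<in> space M. X w \<in> A \<and> Y w = y} * measure M {w \<in> space M. Yt w = z \<and> Y w = y}"
        using indep A unfolding cond_indep_XYt_def by blast
      moreover have "{w \<in> space M. X w \<in> A \<and> Yt w = z \<and> Y w = y} = B1 \<inter> (X -` A \<inter> space M)"
        unfolding B1_def by blast
      moreover have "{w \<in> space M. X w \<in> A \<and> Y w = y} = B2 \<inter> (X -` A \<inter> space M)"
        unfolding B2_def by blast
      ultimately show ?thesis unfolding p_def m_def by simp
    qed
    have ci: "(\<integral>w. indicator B1 w * h (X w) c \<partial>M) * p y = (\<integral>w. indicator B2 w * h (X w) c \<partial>M) * m"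
      by (rule gen_ci[OF _ X _ _ _ _ hyp gm]) (auto simp: finite_measure_axioms p_def m_def)
    have l: "(\<integral>w. indicator B1 w * h (X w) c \<partial>M) = (\<integral>w. h (X w) c * (if Y w = y then 1 else 0) * (if Yt w = z then 1 else 0) \<partial>M)"
      by (rule Bochner_Integration.integral_cong) (auto simp: B1_def indicator_def)
    have r: "(\<integral>w. indicator B2 w * h (X w) c \<partial>M) = Qmat M X h Y $ c $ y"
      unfolding Qmat_def by simp (rule Bochner_Integration.integral_cong, auto simp: B2_def indicator_def)
    have t: "Tmat M Y Yt $ y $ z = m / p y"
      unfolding Tmat_def m_def p_def by (simp add: conj_commute)
    show ?thesis using ci ppos[of y] unfolding l r t by (simp add: field_simps)
  qed
  show ?thesis
  proof (simp add: vec_eq_iff matrix_matrix_mult_def, intro allI)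
    fix c z
    have "Qmat M X h Yt $ c $ z = (\<integral>w. (\<Sum>y\<in>UNIV. h (X w) c * (if Y w = y then 1 else 0) * (if Yt w = z then 1 else 0)) \<partial>M)"
      unfolding Qmat_def
      by (simp, rule Bochner_Integration.integral_cong)
         (simp_all add: sum_distrib_left[symmetric] sum_distrib_right[symmetric] sum.delta)
    also have "\<dots> = (\<Sum>y\<in>UNIV. Qmat M X h Y $ c $ y * Tmat M Y Yt $ y $ z)"
      by (simp add: integral_sum int_clf[OF h Y Yt] entry)
    finally show "Qmat M X h Yt $ c $ z = (\<Sum>y\<in>UNIV. Qmat M X h Y $ c $ y * Tmat M Y Yt $ y $ z)" .
  qed
qed

end

lemma L_le_iff: "L_DMI Q \<le> L_DMI Q' \<longleftrightarrow> \<bar>det Q'\<bar> \<le> \<bar>det Q\<bar>"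
  unfolding L_DMI_def by auto

lemma L_less_iff: "L_DMI Q < L_DMI Q' \<longleftrightarrow> \<bar>det Q'\<bar> < \<bar>det Q\<bar>"
  unfolding L_DMI_def by auto

lemma L_mult: "det T \<noteq> 0 \<Longrightarrow> L_DMI (Q ** T) = L_DMI Q + ereal (- ln \<bar>det T\<bar>)"
  unfolding L_DMI_def by (simp add: det_mul abs_mult ln_mult)

context dmi begin

lemma det_clf_clf:
  assumes f[measurable]: "f \<in> measurable SX (count_space UNIV)"
  shows "is_classifier SX (det_clf f)"
  unfolding is_classifier_def det_clf_def
proof (intro conjI allI)
  fix x show "(\<Sum>c\<in>UNIV. if c = f x then 1 else (0::real)) = 1" by simp
next
  fix c show "(\<lambda>x. if c = f x then 1 else (0::real)) \<in> borel_measurable SX" by measurable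
qed simp

lemma Qf_entry:
  assumes f[measurable]: "f \<in> measurable SX (count_space UNIV)" and ae: "AE w in M. Y w = f (X w)"
  shows "Qmat M X (det_clf f) Y $ c $ y = (if c = y then p y else 0)"
proof -
  have "Qmat M X (det_clf f) Y $ c $ y = (\<integral>w. (if c = f (X w) then 1 else 0) * (if Y w = y then 1 else 0) \<partial>M)"
    unfolding Qmat_def det_clf_def by simp
  also have "\<dots> = (\<integral>w. (if c = y then 1 else 0) * (if Y w = y then 1 else 0) \<partial>M)"
    by (rule integral_cong_AE) (use ae in \<open>auto\<close>)
  also have "\<dots> = (if c = y then p y else 0)" by (simp add: int_ind)
  finally show ?thesis .
qed

lemma det_Qf:
  assumes f[measurable]: "f \<in> measurable SX (count_space UNIV)" and ae: "AE w in M. Y w = f (X w)"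
  shows "det (Qmat M X (det_clf f) Y) = (\<Prod>y\<in>UNIV. p y)"
  by (subst det_diagonal) (simp_all add: Qf_entry[OF f ae])

lemma det_QY_le:
  assumes h: "is_classifier SX h"
  shows "\<bar>det (Qmat M X h Y)\<bar> \<le> (\<Prod>y\<in>UNIV. p y)"
proof -
  have "\<bar>det (transpose (Qmat M X h Y))\<bar> \<le> (\<Prod>y\<in>UNIV. \<Sum>c\<in>UNIV. transpose (Qmat M X h Y) $ y $ c)"
    by (rule det_le_prod_rowsum) (simp add: transpose_def Q_nn[OF h])
  moreover have "(\<Prod>y\<in>UNIV. \<Sum>c\<in>UNIV. transpose (Qmat M X h Y) $ y $ c) = (\<Prod>y\<in>UNIV. p y)"
    by (simp add: transpose_def Q_colsum[OF h])
  ultimately show ?thesis by simp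
qed

lemma det_QY_eq:
  assumes h: "is_classifier SX h" and ppos: "\<And>y. 0 < p y"
    and eq: "\<bar>det (Qmat M X h Y)\<bar> = (\<Prod>y\<in>UNIV. p y)"
  shows "\<exists>\<pi>. bij \<pi> \<and> (\<forall>y c. c \<noteq> \<pi> y \<longrightarrow> Qmat M X h Y $ c $ y = 0)"
proof -
  have rs: "(\<Prod>y\<in>UNIV. \<Sum>c\<in>UNIV. transpose (Qmat M X h Y) $ y $ c) = (\<Prod>y\<in>UNIV. p y)"
    by (simp add: transpose_def Q_colsum[OF h])
  have "\<exists>\<pi>. bij \<pi> \<and> (\<forall>y c. c \<noteq> \<pi> y \<longrightarrow> transpose (Qmat M X h Y) $ y $ c = 0)"
  proof (rule det_eq_prod_rowsum_perm)
    show "\<bar>det (transpose (Qmat M X h Y))\<bar> = (\<Prod>y\<in>UNIV. \<Sum>c\<in>UNIV. transpose (Qmat M X h Y) $ y $ c)"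
      unfolding rs det_transpose by (rule eq)
  qed (simp_all add: transpose_def Q_nn[OF h] Q_colsum[OF h] ppos)
  then show ?thesis by (simp add: transpose_def)
qed

lemma W_decomp:
  assumes h: "is_classifier SX h" and h': "is_classifier SX h'" and ci: "cond_indep_clf M X h h' Y"
  defines "W \<equiv> (\<chi> c c'. P_hh' M X h h' c c' / P_h M X h c)"
  shows "Qmat M X h' Y = transpose W ** Qmat M X h Y" and "\<bar>det W\<bar> \<le> 1"
proof -
  have [measurable]: "(\<lambda>w. h (X w) c) \<in> borel_measurable M" "(\<lambda>w. h' (X w) c) \<in> borel_measurable M" for c
    using clf_meas[OF h] clf_meas[OF h'] by auto
  have int3: "integrable M (\<lambda>w. h (X w) c * h' (X w) c' * (if Y w = y then 1 else 0))" for c c' y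
    by (rule int_bdd[where B=1]) (auto simp: abs_mult clf_nn[OF h] clf_nn[OF h'] clf_le1[OF h] clf_le1[OF h'] mult_le_one)
  have int2: "integrable M (\<lambda>w. h (X w) c * h' (X w) c')" for c c'
    by (rule int_bdd[where B=1]) (auto simp: abs_mult clf_nn[OF h] clf_nn[OF h'] clf_le1[OF h] clf_le1[OF h'] mult_le_one)
  have int1: "integrable M (\<lambda>w. h (X w) c)" for c
    by (rule int_bdd[where B=1]) (auto simp: clf_nn[OF h] clf_le1[OF h])
  have Ph_nn: "0 \<le> P_h M X h c" for c unfolding P_h_def by (simp add: integral_nonneg clf_nn[OF h])
  have Phh_nn: "0 \<le> P_hh' M X h h' c c'" for c c' unfolding P_hh'_def by (simp add: integral_nonneg clf_nn[OF h] clf_nn[OF h'])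
  have key: "P_hh'Y M X h h' Y c c' y = W $ c $ c' * Qmat M X h Y $ c $ y" for c c' y
  proof (cases "P_h M X h c = 0")
    case True
    have "P_hh'Y M X h h' Y c c' y \<le> P_h M X h c"
      unfolding P_hh'Y_def P_h_def
      by (rule integral_mono[OF int3 int1]) (auto simp: clf_nn[OF h] clf_le1[OF h'] mult_left_le)
    moreover have "0 \<le> P_hh'Y M X h h' Y c c' y"
      unfolding P_hh'Y_def by (simp add: integral_nonneg clf_nn[OF h] clf_nn[OF h'])
    ultimately show ?thesis using True by (simp add: W_def)
  next
    case False
    have "P_hh'Y M X h h' Y c c' y * P_h M X h c = P_hY M X h Y c y * P_hh' M X h h' c c'"
      using ci unfolding cond_indep_clf_def by blast
    moreover have "P_hY M X h Y c y = Qmat M X h Y $ c $ y" unfolding P_hY_def Qmat_def by simp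
    ultimately show ?thesis using False by (simp add: W_def field_simps)
  qed
  show "Qmat M X h' Y = transpose W ** Qmat M X h Y"
  proof (simp add: vec_eq_iff matrix_matrix_mult_def transpose_def, intro allI)
    fix c' y
    have "Qmat M X h' Y $ c' $ y = (\<integral>w. (\<Sum>c\<in>UNIV. h (X w) c * h' (X w) c' * (if Y w = y then 1 else 0)) \<partial>M)"
      unfolding Qmat_def
      by (simp, rule Bochner_Integration.integral_cong)
         (simp_all add: sum_distrib_right[symmetric] clf_sum[OF h])
    also have "\<dots> = (\<Sum>c\<in>UNIV. P_hh'Y M X h h' Y c c' y)"
      unfolding P_hh'Y_def by (simp add: integral_sum int3)
    finally show "Qmat M X h' Y $ c' $ y = (\<Sum>c\<in>UNIV. W $ c $ c' * Qmat M X h Y $ c $ y)"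
      by (simp add: key)
  qed
  have rs: "(\<Sum>c'\<in>UNIV. W $ c $ c') = P_h M X h c / P_h M X h c" for c
  proof -
    have "(\<Sum>c'\<in>UNIV. P_hh' M X h h' c c') = P_h M X h c"
    proof -
      have "(\<Sum>c'\<in>UNIV. P_hh' M X h h' c c') = (\<integral>w. (\<Sum>c'\<in>UNIV. h (X w) c * h' (X w) c') \<partial>M)"
        unfolding P_hh'_def by (simp add: integral_sum int2)
      also have "\<dots> = P_h M X h c"
        unfolding P_h_def
        by (rule Bochner_Integration.integral_cong) (simp_all add: sum_distrib_left[symmetric] clf_sum[OF h'])
      finally show ?thesis .
    qed
    then show ?thesis by (simp add: W_def sum_divide_distrib[symmetric])
  qed
  have "\<bar>det W\<bar> \<le> (\<Prod>c\<in>UNIV. \<Sum>c'\<in>UNIV. W $ c $ c')"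
    by (rule det_le_prod_rowsum) (simp add: W_def Ph_nn Phh_nn)
  also have "\<dots> \<le> 1"
    unfolding rs by (rule prod_le_1) (simp add: Ph_nn)
  finally show "\<bar>det W\<bar> \<le> 1" .
qed

end

theorem theorem4p1:
  fixes M :: "'w measure" and SX :: "'x measure"
    and X :: "'w \<Rightarrow> 'x" and Y Yt :: "'w \<Rightarrow> 'c::finite"
  assumes "prob_space M"
    and "X \<in> measurable M SX"
    and "Y \<in> measurable M (count_space UNIV)"
    and "Yt \<in> measurable M (count_space UNIV)"
    and indep: "cond_indep_XYt M SX X Y Yt"
    and inform: "invertible (Tmat M Y Yt)"
  shows
    "(\<forall>f. f \<in> measurable SX (count_space UNIV) \<and> (AE w in M. Y w = f (X w)) \<longrightarrow>
       (\<forall>h. is_classifier SX h \<longrightarrow>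
          L_DMI (Qmat M X (det_clf f) Yt) \<le> L_DMI (Qmat M X h Yt) \<and>
          ((\<nexists>\<pi>. bij \<pi> \<and> (AE w in M. \<forall>c. h (X w) c = det_clf (\<pi> \<circ> f) (X w) c)) \<longrightarrow>
             L_DMI (Qmat M X (det_clf f) Yt) < L_DMI (Qmat M X h Yt))))
   \<and> {h. is_classifier SX h \<and> (\<forall>h'. is_classifier SX h' \<longrightarrow> L_DMI (Qmat M X h Yt) \<le> L_DMI (Qmat M X h' Yt))}
     = {h. is_classifier SX h \<and> (\<forall>h'. is_classifier SX h' \<longrightarrow> L_DMI (Qmat M X h Y) \<le> L_DMI (Qmat M X h' Y))}
   \<and> (\<exists>\<alpha>::real. \<forall>h. is_classifier SX h \<longrightarrow> L_DMI (Qmat M X h Yt) = L_DMI (Qmat M X h Y) + ereal \<alpha>)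
   \<and> (\<forall>h h'. is_classifier SX h \<and> is_classifier SX h' \<and> cond_indep_clf M X h h' Y \<longrightarrow>
          L_DMI (Qmat M X h Yt) \<le> L_DMI (Qmat M X h' Yt))"
proof -
  interpret dmi M SX X Y Yt
    using assms(1-4) by (simp add: dmi_def dmi_axioms_def)
  have ppos: "\<And>y. 0 < p y" by (rule p_pos_of_inv[OF inform])
  define T where "T = Tmat M Y Yt"
  have dT: "det T \<noteq> 0" using inform by (simp add: T_def invertible_det_nz)
  then have aT: "0 < \<bar>det T\<bar>" by simp
  have QD: "Qmat M X h Yt = Qmat M X h Y ** T" if "is_classifier SX h" for h
    unfolding T_def by (rule Q_decomp[OF indep ppos that])
  have absdet: "\<bar>det (Qmat M X h Yt)\<bar> = \<bar>det (Qmat M X h Y)\<bar> * \<bar>det T\<bar>" if "is_classifier SX h" for h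
    by (simp add: QD[OF that] det_mul abs_mult)
  have P1: "L_DMI (Qmat M X (det_clf f) Yt) \<le> L_DMI (Qmat M X h Yt) \<and>
          ((\<nexists>\<pi>. bij \<pi> \<and> (AE w in M. \<forall>c. h (X w) c = det_clf (\<pi> \<circ> f) (X w) c)) \<longrightarrow>
             L_DMI (Qmat M X (det_clf f) Yt) < L_DMI (Qmat M X h Yt))"
    if f: "f \<in> measurable SX (count_space UNIV)" and ae: "AE w in M. Y w = f (X w)"
      and h: "is_classifier SX h" for f h
  proof -
    have fc: "is_classifier SX (det_clf f)" by (rule det_clf_clf[OF f])
    have pf: "\<bar>det (Qmat M X (det_clf f) Y)\<bar> = (\<Prod>y\<in>UNIV. p y)"
      using det_Qf[OF f ae] ppos by (simp add: less_imp_le prod_nonneg)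
    have le: "\<bar>det (Qmat M X h Y)\<bar> \<le> (\<Prod>y\<in>UNIV. p y)" by (rule det_QY_le[OF h])
    have A: "L_DMI (Qmat M X (det_clf f) Yt) \<le> L_DMI (Qmat M X h Yt)"
      unfolding L_le_iff absdet[OF h] absdet[OF fc] pf using le aT by (simp add: mult_right_mono)
    have B: "L_DMI (Qmat M X (det_clf f) Yt) < L_DMI (Qmat M X h Yt)"
      if nop: "\<nexists>\<pi>. bij \<pi> \<and> (AE w in M. \<forall>c. h (X w) c = det_clf (\<pi> \<circ> f) (X w) c)"
    proof -
      have "\<bar>det (Qmat M X h Y)\<bar> < (\<Prod>y\<in>UNIV. p y)"
      proof (rule ccontr)
        assume "\<not> ?thesis"
        with le have eq: "\<bar>det (Qmat M X h Y)\<bar> = (\<Prod>y\<in>UNIV. p y)" by simp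
        obtain \<pi> where b: "bij \<pi>" and z: "\<And>y c. c \<noteq> \<pi> y \<Longrightarrow> Qmat M X h Y $ c $ y = 0"
          using det_QY_eq[OF h ppos eq] by blast
        have ae0: "AE w in M. c \<noteq> \<pi> y \<longrightarrow> h (X w) c * (if Y w = y then 1 else 0) = 0" for c y
        proof (cases "c = \<pi> y")
          case True then show ?thesis by simp
        next
          case False
          have "(\<integral>w. h (X w) c * (if Y w = y then 1 else 0) \<partial>M) = 0"
            using z[OF False] unfolding Qmat_def by simp
          then have "AE w in M. h (X w) c * (if Y w = y then 1 else 0) = 0"
            by (subst (asm) integral_nonneg_eq_0_iff_AE[OF int_clf(1)[OF h Y Y]]) (simp_all add: clf_nn[OF h])
          then show ?thesis by (rule eventually_mono) simp
        qed
        have ae1: "AE w in M. \<forall>y c. c \<noteq> \<pi> y \<longrightarrow> h (X w) c * (if Y w = y then 1 else 0) = 0"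
          using ae0 by (simp add: AE_all_countable)
        have "AE w in M. \<forall>c. h (X w) c = det_clf (\<pi> \<circ> f) (X w) c"
          using ae1 ae
        proof eventually_elim
          case (elim w)
          have zc: "h (X w) c = 0" if "c \<noteq> \<pi> (Y w)" for c
            using elim(1) that by (metis mult_cancel_left1 mult_zero_right)
          have "1 = (\<Sum>c\<in>UNIV. h (X w) c)" using clf_sum[OF h] by simp
          also have "\<dots> = h (X w) (\<pi> (Y w)) + (\<Sum>c\<in>UNIV - {\<pi> (Y w)}. h (X w) c)"
            by (rule sum.remove) simp_all
          also have "(\<Sum>c\<in>UNIV - {\<pi> (Y w)}. h (X w) c) = 0"
            by (rule sum.neutral) (simp add: zc)
          finally have one: "h (X w) (\<pi> (Y w)) = 1" by simp
          show ?case
          proof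
            fix c show "h (X w) c = det_clf (\<pi> \<circ> f) (X w) c"
              using one zc[of c] elim(2) by (cases "c = \<pi> (Y w)") (simp_all add: det_clf_def)
          qed
        qed
        with b nop show False by blast
      qed
      then show ?thesis
        unfolding L_less_iff absdet[OF h] absdet[OF fc] pf using aT by (simp add: mult_strict_right_mono)
    qed
    from A B show ?thesis by blast
  qed
  have P2: "L_DMI (Qmat M X h Yt) \<le> L_DMI (Qmat M X h' Yt) \<longleftrightarrow> L_DMI (Qmat M X h Y) \<le> L_DMI (Qmat M X h' Y)"
    if "is_classifier SX h" "is_classifier SX h'" for h h'
    unfolding L_le_iff absdet[OF that(1)] absdet[OF that(2)] using aT by simp
  have P3: "\<exists>\<alpha>::real. \<forall>h. is_classifier SX h \<longrightarrow> L_DMI (Qmat M X h Yt) = L_DMI (Qmat M X h Y) + ereal \<alpha>"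
    by (rule exI[of _ "- ln \<bar>det T\<bar>"]) (simp add: QD L_mult[OF dT])
  have P4: "L_DMI (Qmat M X h Yt) \<le> L_DMI (Qmat M X h' Yt)"
    if h: "is_classifier SX h" and h': "is_classifier SX h'" and ci: "cond_indep_clf M X h h' Y" for h h'
  proof -
    define W where "W = (\<chi> c c'. P_hh' M X h h' c c' / P_h M X h c)"
    have Wd: "Qmat M X h' Y = transpose W ** Qmat M X h Y" and Wb: "\<bar>det W\<bar> \<le> 1"
      using W_decomp[OF h h' ci] unfolding W_def by auto
    have "\<bar>det (Qmat M X h' Y)\<bar> = \<bar>det W\<bar> * \<bar>det (Qmat M X h Y)\<bar>"
      unfolding Wd by (simp add: det_mul abs_mult)
    also have "\<dots> \<le> \<bar>det (Qmat M X h Y)\<bar>" using Wb by (simp add: mult_left_le_one_le)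
    finally have "\<bar>det (Qmat M X h' Y)\<bar> \<le> \<bar>det (Qmat M X h Y)\<bar>" .
    then show ?thesis unfolding L_le_iff absdet[OF h] absdet[OF h'] using aT by (simp add: mult_right_mono)
  qed
  have S1: "\<forall>f. f \<in> measurable SX (count_space UNIV) \<and> (AE w in M. Y w = f (X w)) \<longrightarrow>
       (\<forall>h. is_classifier SX h \<longrightarrow>
          L_DMI (Qmat M X (det_clf f) Yt) \<le> L_DMI (Qmat M X h Yt) \<and>
          ((\<nexists>\<pi>. bij \<pi> \<and> (AE w in M. \<forall>c. h (X w) c = det_clf (\<pi> \<circ> f) (X w) c)) \<longrightarrow>
             L_DMI (Qmat M X (det_clf f) Yt) < L_DMI (Qmat M X h Yt)))"
  proof (intro allI impI)
    fix f :: "'x \<Rightarrow> 'c" and h :: "'x \<Rightarrow> 'c \<Rightarrow> real" assume "f \<in> measurable SX (count_space UNIV) \<and> (AE w in M. Y w = f (X w))" "is_classifier SX h"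
    then show "L_DMI (Qmat M X (det_clf f) Yt) \<le> L_DMI (Qmat M X h Yt) \<and>
          ((\<nexists>\<pi>. bij \<pi> \<and> (AE w in M. \<forall>c. h (X w) c = det_clf (\<pi> \<circ> f) (X w) c)) \<longrightarrow>
             L_DMI (Qmat M X (det_clf f) Yt) < L_DMI (Qmat M X h Yt))"
      using P1 by (elim conjE) 
  qed
  have S2: "{h. is_classifier SX h \<and> (\<forall>h'. is_classifier SX h' \<longrightarrow> L_DMI (Qmat M X h Yt) \<le> L_DMI (Qmat M X h' Yt))}
     = {h. is_classifier SX h \<and> (\<forall>h'. is_classifier SX h' \<longrightarrow> L_DMI (Qmat M X h Y) \<le> L_DMI (Qmat M X h' Y))}"
  proof (rule Collect_cong)
    fix h :: "'x \<Rightarrow> 'c \<Rightarrow> real"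
    show "(is_classifier SX h \<and> (\<forall>h'. is_classifier SX h' \<longrightarrow> L_DMI (Qmat M X h Yt) \<le> L_DMI (Qmat M X h' Yt))) =
          (is_classifier SX h \<and> (\<forall>h'. is_classifier SX h' \<longrightarrow> L_DMI (Qmat M X h Y) \<le> L_DMI (Qmat M X h' Y)))"
    proof (cases "is_classifier SX h")
      case True
      then show ?thesis using P2[OF True] by simp
    qed simp
  qed
  have S4: "\<forall>h h'. is_classifier SX h \<and> is_classifier SX h' \<and> cond_indep_clf M X h h' Y \<longrightarrow>
          L_DMI (Qmat M X h Yt) \<le> L_DMI (Qmat M X h' Yt)"
    using P4 by (intro allI impI) (elim conjE)
  show ?thesis using S1 S2 P3 S4 by (intro conjI)
qed

end
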